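(* Let $(A,\circ)$ be an anti-pre-Lie algebra with sub-adjacent Lie algebra $(A,[-,-])$, $[x,y]=x\circ y-y\circ x$. Then there exists a nondegenerate bilinear form $\mathcal B$ on $A$ which is invariant on $(A,\circ)$, i.e. $\mathcal B(x\circ y,z)=\mathcal B(y,[x,z])$ for all $x,y,z\in A$, if and only if the representations $(-\mathcal L_\circ,A)$ and $(\mathrm{ad}^*,A^* )$ of the Lie algebra $(A,[-,-])$ are equivalent.
   Context: All vector spaces are finite-dimensional over a field $\mathbb F$ of characteristic $0$. An anti-pre-Lie algebra is a vector space $A$ with a bilinear operation $\circ$ such that, writing $[x,y]=x\circ y-y\circ x$, for all $x,y,z\in A$: (i) $x\circ(y\circ z)-y\circ(x\circ z)=[y,x]\circ z$, and (ii) $[x,y]\circ z+[y,z]\circ x+[z,x]\circ y=0$; then $(A,[-,-])$ is a Lie algebra. $\mathcal L_\circ(x)y=x\circ y$; $(-\mathcal L_\circ,A)$ is a representation of $(A,[-,-])$. $\mathrm{ad}^*$ is the coadjoint representation: $\langle \mathrm{ad}^*(x)a^*,y\rangle=-\langle a^*,[x,y]\rangle$. Two representations $(\rho_1,V_1),(\rho_2,V_2)$ are equivalent if there is a linear isomorphism $\varphi:V_1\to V_2$ with $\varphi(\rho_1(x)v)=\rho_2(x)\varphi(v)$. *)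

theory Defs
  imports "HOL-Analysis.Analysis"
begin

text \<open>A finite-dimensional vector space over a field of characteristic 0 is modelled
  as 'k^'n with 'n a finite index type; scalar multiplication is (*s).\<close>

type_synonym ('k, 'n) alg_op = "'k^'n \<Rightarrow> 'k^'n \<Rightarrow> 'k^'n"

definition bilinear_op :: "('k::field, 'n::finite) alg_op \<Rightarrow> bool" where
  "bilinear_op m \<longleftrightarrow>
     (\<forall>x. Vector_Spaces.linear (*s) (*s) (m x)) \<and>
     (\<forall>y. Vector_Spaces.linear (*s) (*s) (\<lambda>x. m x y))"

definition commutator :: "('k::field, 'n::finite) alg_op \<Rightarrow> 'k^'n \<Rightarrow> 'k^'n \<Rightarrow> 'k^'n" where
  "commutator m x y = m x y - m y x"

definition anti_pre_Lie :: "('k::field, 'n::finite) alg_op \<Rightarrow> bool" where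
  "anti_pre_Lie m \<longleftrightarrow> bilinear_op m \<and>
     (\<forall>x y z. m x (m y z) - m y (m x z) = m (commutator m y x) z) \<and>
     (\<forall>x y z. m (commutator m x y) z + m (commutator m y z) x + m (commutator m z x) y = 0)"

definition bilinear_form :: "('k::field^'n::finite \<Rightarrow> 'k^'n \<Rightarrow> 'k) \<Rightarrow> bool" where
  "bilinear_form B \<longleftrightarrow>
     (\<forall>x. Vector_Spaces.linear (*s) (*) (B x)) \<and>
     (\<forall>y. Vector_Spaces.linear (*s) (*) (\<lambda>x. B x y))"

definition nondegenerate :: "('k::field^'n::finite \<Rightarrow> 'k^'n \<Rightarrow> 'k) \<Rightarrow> bool" where
  "nondegenerate B \<longleftrightarrow>
     (\<forall>x. (\<forall>y. B x y = 0) \<longrightarrow> x = 0) \<and> (\<forall>y. (\<forall>x. B x y = 0) \<longrightarrow> y = 0)"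

text \<open>Invariance on (A, o): B(x o y, z) = B(y, [x,z]).\<close>
definition invariant_form :: "('k::field, 'n::finite) alg_op \<Rightarrow> ('k^'n \<Rightarrow> 'k^'n \<Rightarrow> 'k) \<Rightarrow> bool" where
  "invariant_form m B \<longleftrightarrow> (\<forall>x y z. B (m x y) z = B y (commutator m x z))"

text \<open>The dual space A* = linear functionals on A.\<close>
definition dual_space :: "('k::field^'n::finite \<Rightarrow> 'k) set" where
  "dual_space = {f. Vector_Spaces.linear (*s) (*) f}"

text \<open>Coadjoint representation of the Lie algebra (A,[-,-]):
  <ad*(x) a, y> = - <a, [x,y]>.\<close>
definition coad :: "('k::field, 'n::finite) alg_op \<Rightarrow> 'k^'n \<Rightarrow> ('k^'n \<Rightarrow> 'k) \<Rightarrow> ('k^'n \<Rightarrow> 'k)" where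
  "coad m x a = (\<lambda>y. - a (commutator m x y))"

text \<open>Representation (-L_o, A): x acts by v \<mapsto> -(x o v).\<close>
definition neg_left_mult :: "('k::field, 'n::finite) alg_op \<Rightarrow> 'k^'n \<Rightarrow> 'k^'n \<Rightarrow> 'k^'n" where
  "neg_left_mult m x v = - m x v"

text \<open>Equivalence of (-L_o, A) and (ad*, A*): a linear isomorphism phi : A \<rightarrow> A*
  intertwining the actions.\<close>
definition equiv_negL_coad :: "('k::field, 'n::finite) alg_op \<Rightarrow> bool" where
  "equiv_negL_coad m \<longleftrightarrow> (\<exists>\<phi> :: 'k^'n \<Rightarrow> ('k^'n \<Rightarrow> 'k).
     (\<forall>u v y. \<phi> (u + v) y = \<phi> u y + \<phi> v y) \<and>
     (\<forall>c u y. \<phi> (c *s u) y = c * \<phi> u y) \<and>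
     bij_betw \<phi> UNIV dual_space \<and>
     (\<forall>x v. \<phi> (neg_left_mult m x v) = coad m x (\<phi> v)))"

end

theory Submission
  imports Defs
begin

lemma lin_s_s_iff:
  "Vector_Spaces.linear (*s) (*s) (f :: 'k::field^'n::finite \<Rightarrow> 'k^'m::finite) \<longleftrightarrow>
   (\<forall>x y. f (x + y) = f x + f y) \<and> (\<forall>c x. f (c *s x) = c *s f x)"
  by (simp add: Vector_Spaces.linear_iff vec.vector_space_axioms)

lemma lin_s_t_iff:
  "Vector_Spaces.linear (*s) (*) (f :: 'k::field^'n::finite \<Rightarrow> 'k) \<longleftrightarrow>
   (\<forall>x y. f (x + y) = f x + f y) \<and> (\<forall>c x. f (c *s x) = c * f x)"
  by (simp add: Vector_Spaces.linear_iff vec.vector_space_axioms vector_space_over_itself.vector_space_axioms)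

lemma functional_expand:
  assumes "Vector_Spaces.linear (*s) (*) (f :: 'k::field^'n::finite \<Rightarrow> 'k)"
  shows "f y = (\<Sum>i\<in>UNIV. y$i * f (axis i 1))"
proof -
  interpret L: Vector_Spaces.linear "(*s)" "(*)" f by fact
  have "f y = f (\<Sum>i\<in>UNIV. (y$i) *s axis i 1)" by (simp add: basis_expansion)
  also have "\<dots> = (\<Sum>i\<in>UNIV. y$i * f (axis i 1))"
    by (simp add: L.sum L.scale)
  finally show ?thesis .
qed

theorem proposition2p24:
  fixes m :: "('k::field_char_0, 'n::finite) alg_op"
  assumes "anti_pre_Lie m"
  shows "(\<exists>B. bilinear_form B \<and> nondegenerate B \<and> invariant_form m B)
         \<longleftrightarrow> equiv_negL_coad m"
proof
  assume "\<exists>B. bilinear_form B \<and> nondegenerate B \<and> invariant_form m B"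
  then obtain B where bf: "bilinear_form B" and nd: "nondegenerate B" and inv: "invariant_form m B"
    by blast
  have l1: "\<And>x. Vector_Spaces.linear (*s) (*) (B x)" using bf by (simp add: bilinear_form_def)
  have l2: "\<And>y. Vector_Spaces.linear (*s) (*) (\<lambda>x. B x y)" using bf by (simp add: bilinear_form_def)
  have add1: "\<And>u v y. B (u + v) y = B u y + B v y" using l2 by (simp add: lin_s_t_iff)
  have sc1: "\<And>c u y. B (c *s u) y = c * B u y" using l2 by (simp add: lin_s_t_iff)
  define \<psi> :: "'k^'n \<Rightarrow> 'k^'n" where "\<psi> v = (\<chi> i. B v (axis i 1))" for v
  have lpsi: "Vector_Spaces.linear (*s) (*s) \<psi>"
    unfolding lin_s_s_iff \<psi>_def
    apply (intro conjI allI)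
     apply (subst vec_eq_iff) apply (simp only: vector_add_component vec_lambda_beta add1) apply simp
    apply (subst vec_eq_iff) apply (simp only: vector_smult_component vec_lambda_beta sc1) by simp
  have exp: "B v y = (\<Sum>i\<in>UNIV. y$i * \<psi> v $ i)" for v y
  proof -
    have "B v y = (\<Sum>i\<in>UNIV. y$i * B v (axis i 1))" by (rule functional_expand[OF l1])
    also have "\<dots> = (\<Sum>i\<in>UNIV. y$i * \<psi> v $ i)" by (simp add: \<psi>_def)
    finally show ?thesis .
  qed
  have ipsi: "inj \<psi>"
  proof (rule injI)
    fix u v assume "\<psi> u = \<psi> v"
    then have "\<forall>y. B (u - v) y = 0"
    proof (intro allI)
      fix y
      interpret L: Vector_Spaces.linear "(*s)" "(*)" "\<lambda>x. B x y" by (rule l2)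
      have "B (u - v) y = B u y - B v y" by (rule L.diff)
      also have "\<dots> = 0" using exp[of u y] exp[of v y] \<open>\<psi> u = \<psi> v\<close> by simp
      finally show "B (u - v) y = 0" .
    qed
    then have "u - v = 0" using nd unfolding nondegenerate_def by blast
    then show "u = v" by simp
  qed
  have spsi: "surj \<psi>" using vec.linear_inj_imp_surj[OF lpsi ipsi] .
  show "equiv_negL_coad m"
    unfolding equiv_negL_coad_def
  proof (intro exI[of _ B] conjI allI)
    show "B (u + v) y = B u y + B v y" for u v y by (rule add1)
    show "B (c *s u) y = c * B u y" for c u y by (rule sc1)
    show "B (neg_left_mult m x v) = coad m x (B v)" for x v
    proof
      fix y
      have "B (neg_left_mult m x v) y = B ((-1) *s m x v) y" by (simp add: neg_left_mult_def)
      also have "\<dots> = - B (m x v) y" by (simp only: sc1) simp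
      finally show "B (neg_left_mult m x v) y = coad m x (B v) y"
        using inv by (simp add: coad_def invariant_form_def)
    qed
    show "bij_betw B UNIV dual_space"
      unfolding bij_betw_def
    proof (intro conjI)
      show "inj B"
      proof (rule injI)
        fix u v assume "B u = B v"
        then have "\<psi> u = \<psi> v" by (simp add: \<psi>_def)
        then show "u = v" using ipsi by (simp add: inj_eq)
      qed
      show "range B = dual_space"
      proof
        show "range B \<subseteq> dual_space" using l1 by (auto simp: dual_space_def)
        show "dual_space \<subseteq> range B"
        proof
          fix f :: "'k^'n \<Rightarrow> 'k" assume "f \<in> dual_space"
          then have lf: "Vector_Spaces.linear (*s) (*) f" by (simp add: dual_space_def)
          obtain v where v: "\<psi> v = (\<chi> i. f (axis i 1))" using spsi by (metis surjD)
          have "B v = f"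
          proof
            fix y show "B v y = f y"
              using exp[of v y] functional_expand[OF lf, of y] v by simp
          qed
          then show "f \<in> range B" by blast
        qed
      qed
    qed
  qed
next
  assume "equiv_negL_coad m"
  then obtain \<phi> :: "'k^'n \<Rightarrow> ('k^'n \<Rightarrow> 'k)" where
    add: "\<And>u v y. \<phi> (u + v) y = \<phi> u y + \<phi> v y" and
    sc: "\<And>c u y. \<phi> (c *s u) y = c * \<phi> u y" and
    bij: "bij_betw \<phi> UNIV dual_space" and
    int: "\<And>x v. \<phi> (neg_left_mult m x v) = coad m x (\<phi> v)"
    unfolding equiv_negL_coad_def by blast
  have lin: "\<And>u. Vector_Spaces.linear (*s) (*) (\<phi> u)"
    using bij by (auto simp: bij_betw_def dual_space_def)
  have ij: "inj \<phi>" using bij by (simp add: bij_betw_def)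
  have rg: "range \<phi> = dual_space" using bij by (simp add: bij_betw_def)
  show "\<exists>B. bilinear_form B \<and> nondegenerate B \<and> invariant_form m B"
  proof (intro exI[of _ \<phi>] conjI)
    show "bilinear_form \<phi>"
      unfolding bilinear_form_def using lin by (simp add: lin_s_t_iff add sc)
    have z: "\<phi> 0 = (\<lambda>y. 0)" using sc[of 0 0] by (auto)
    show "nondegenerate \<phi>"
      unfolding nondegenerate_def
    proof (intro conjI allI impI)
      fix x assume "\<forall>y. \<phi> x y = 0"
      then have "\<phi> x = \<phi> 0" using z by auto
      then show "x = 0" using ij by (simp add: inj_eq)
    next
      fix y :: "'k^'n" assume h: "\<forall>x. \<phi> x y = 0"
      show "y = 0"
      proof (subst vec_eq_iff, intro allI)
        fix i
        have "(\<lambda>z::'k^'n. z$i) \<in> dual_space" by (simp add: dual_space_def lin_s_t_iff)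
        then obtain x where "\<phi> x = (\<lambda>z. z$i)" using rg by (metis imageE)
        then show "y$i = 0$i" using h by (metis zero_index)
      qed
    qed
    show "invariant_form m \<phi>"
      unfolding invariant_form_def
    proof (intro allI)
      fix x y z
      have "\<phi> (neg_left_mult m x y) z = - \<phi> (m x y) z"
        using sc[of "-1" "m x y" z] by (simp add: neg_left_mult_def)
      then show "\<phi> (m x y) z = \<phi> y (commutator m x z)"
        using int[of x y] by (simp add: coad_def)
    qed
  qed
qed

end
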